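(* Let $\mathsf C=(C_1,\dots,C_n)$ be an $n$-outcome observable on a Hilbert space $\mathcal H_d$ of finite dimension $d$. Then $$\sup_{\mathsf A}\|\mathsf C-\mathsf A\|=2\big(1-b(\mathsf C)\big),$$ where the supremum is over all $n$-outcome observables $\mathsf A=(A_1,\dots,A_n)$ on $\mathcal H_d$ and $\|\mathsf C-\mathsf A\|=\sup_{\varrho}\sum_{j=1}^n|\operatorname{tr}(\varrho(C_j-A_j))|$, the supremum being over density operators $\varrho$ on $\mathcal H_d$.
   Context: An $n$-outcome observable on $\mathcal H_d$ is an $n$-tuple of positive operators summing to $I$; these form a convex set $Z$ under componentwise convex combination. The norm $\|\cdot\|$ above is the base norm (equivalently completely bounded norm) for observables. For $x,y\in Z$, the weight function is $t_y(x)=\sup\{0\leq t<1 : \frac{y-tx}{1-t}\in Z\}$, and the boundariness of $y$ is $b(y)=\inf_{x\in Z}t_y(x)$. (Here $b(\mathsf C)$ equals the smallest eigenvalue among all $C_j$.) *)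

theory Defs
  imports "Jordan_Normal_Form.Schur_Decomposition"
begin

text \<open>Operators on H_d = C^d are d x d complex matrices.\<close>

definition mtrace :: "complex mat \<Rightarrow> complex" where
  "mtrace A = (\<Sum>i<dim_row A. A $$ (i, i))"

definition positive_op :: "nat \<Rightarrow> complex mat \<Rightarrow> bool" where
  "positive_op d A \<longleftrightarrow> A \<in> carrier_mat d d \<and> mat_adjoint A = A \<and>
     (\<forall>v \<in> carrier_vec d. Im (conjugate v \<bullet> (A *\<^sub>v v)) = 0 \<and>
                            0 \<le> Re (conjugate v \<bullet> (A *\<^sub>v v)))"

definition density_op :: "nat \<Rightarrow> complex mat \<Rightarrow> bool" where
  "density_op d \<rho> \<longleftrightarrow> positive_op d \<rho> \<and> mtrace \<rho> = 1"

fun msum :: "nat \<Rightarrow> nat \<Rightarrow> (nat \<Rightarrow> complex mat) \<Rightarrow> complex mat" where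
  "msum d 0 A = 0\<^sub>m d d"
| "msum d (Suc n) A = msum d n A + A n"

text \<open>An n-outcome observable on C^d: components A 0, ..., A (n-1)
  (indices \<ge> n are irrelevant), positive, summing to the identity.\<close>
definition observable :: "nat \<Rightarrow> nat \<Rightarrow> (nat \<Rightarrow> complex mat) \<Rightarrow> bool" where
  "observable d n A \<longleftrightarrow> (\<forall>j<n. positive_op d (A j)) \<and>
     msum d n A = 1\<^sub>m d"

definition obs_dist :: "nat \<Rightarrow> nat \<Rightarrow> (nat \<Rightarrow> complex mat) \<Rightarrow> (nat \<Rightarrow> complex mat) \<Rightarrow> real" where
  "obs_dist d n C A =
     (SUP \<rho> \<in> {\<rho>. density_op d \<rho>}. \<Sum>j<n. cmod (mtrace (\<rho> * (C j - A j))))"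

definition weight :: "nat \<Rightarrow> nat \<Rightarrow> (nat \<Rightarrow> complex mat) \<Rightarrow> (nat \<Rightarrow> complex mat) \<Rightarrow> real" where
  "weight d n y x =
     Sup {t::real. 0 \<le> t \<and> t < 1 \<and>
        observable d n (\<lambda>j. (1 / (1 - t)) \<cdot>\<^sub>m (y j - t \<cdot>\<^sub>m x j))}"

definition boundariness :: "nat \<Rightarrow> nat \<Rightarrow> (nat \<Rightarrow> complex mat) \<Rightarrow> real" where
  "boundariness d n y = (INF x \<in> {x. observable d n x}. weight d n y x)"

end

theory Submission
  imports Defs
begin


lemma qform_sum:
  assumes "A \<in> carrier_mat d d" "v \<in> carrier_vec d"
  shows "conjugate v \<bullet> (A *\<^sub>v v) = (\<Sum>i<d. \<Sum>k<d. cnj (v$i) * A$$(i,k) * v$k)"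
  using assms
  by (auto simp: scalar_prod_def row_def sum_distrib_left mult.assoc lessThan_atLeast0 intro!: sum.cong)

lemma adj_entry:
  assumes "A \<in> carrier_mat d d" "mat_adjoint A = A" "i < d" "k < d"
  shows "A$$(k,i) = cnj (A$$(i,k))"
proof -
  have "mat_adjoint A $$ (k,i) = cnj (A$$(i,k))"
    using assms(1,3,4) by (simp add: mat_adjoint_def mat_of_rows_def)
  thus ?thesis using assms(2) by simp
qed

lemma sum_two:
  assumes "i<(N::nat)" "j<N" "i\<noteq>j" "\<forall>k. k\<noteq>i \<longrightarrow> k\<noteq>j \<longrightarrow> h k = 0"
  shows "(\<Sum>k<N. h k) = h i + h j"
proof -
  have "(\<Sum>k\<in>{i,j}. h k) = (\<Sum>k<N. h k)"
    apply (rule sum.mono_neutral_left)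
    using assms by auto
  thus ?thesis using assms(3) by simp
qed

lemma sum_one:
  assumes "j<(N::nat)" "\<forall>k. k\<noteq>j \<longrightarrow> h k = 0"
  shows "(\<Sum>k<N. h k) = h j"
proof -
  have "(\<Sum>k\<in>{j}. h k) = (\<Sum>k<N. h k)"
    apply (rule sum.mono_neutral_left)
    using assms by auto
  thus ?thesis by simp
qed

lemma zero_offdiag:
  fixes f :: "nat \<Rightarrow> nat \<Rightarrow> complex"
  assumes herm: "\<forall>i<N. \<forall>k<N. f k i = cnj (f i k)"
    and psd: "\<forall>x. 0 \<le> Re (\<Sum>i<N. \<Sum>k<N. cnj (x i) * f i k * x k)"
    and ij: "i<N" "j<N" "i\<noteq>j" and fjj: "f j j = 0"
  shows "f i j = 0"
proof (rule ccontr)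
  assume nz: "f i j \<noteq> 0"
  define c where "c = cmod (f i j)"
  have c: "c > 0" using nz by (simp add: c_def)
  define M where "M = (\<bar>Re (f i i)\<bar> + 1) / (2 * c^2)"
  define t where "t = - complex_of_real M * cnj (f i j)"
  define x where "x = (\<lambda>k. if k = i then 1 else if k = j then t else 0)"
  have xi: "x i = 1" and xj: "x j = t" and x0: "\<And>k. k \<noteq> i \<Longrightarrow> k \<noteq> j \<Longrightarrow> x k = 0"
    using ij(3) by (auto simp: x_def)
  have inner: "(\<Sum>k<N. cnj (x a) * f a k * x k) = cnj (x a) * f a i + cnj (x a) * f a j * t" for a
    by (subst sum_two[OF ij]) (simp_all add: xi xj x0)
  have "(\<Sum>a<N. \<Sum>k<N. cnj (x a) * f a k * x k) = f i i + f i j * t + cnj t * f j i"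
    apply (simp only: inner)
    apply (subst sum_two[OF ij])
    using fjj by (simp_all add: xi xj x0)
  also have "f j i = cnj (f i j)" using herm[rule_format, OF ij(1) ij(2)] .
  finally have Q: "(\<Sum>a<N. \<Sum>k<N. cnj (x a) * f a k * x k) = f i i + f i j * t + cnj t * cnj (f i j)" .
  have fc: "f i j * cnj (f i j) = complex_of_real (c^2)"
    unfolding c_def complex_norm_square by (rule refl)
  have t1: "f i j * t = - complex_of_real M * (f i j * cnj (f i j))" unfolding t_def by (simp add: mult_ac)
  have t2: "cnj t * cnj (f i j) = - complex_of_real M * (f i j * cnj (f i j))" unfolding t_def by (simp add: mult_ac)
  have M2: "2 * M * c^2 = \<bar>Re (f i i)\<bar> + 1" using c unfolding M_def by simp
  have "Re (f i i + f i j * t + cnj t * cnj (f i j)) = Re (f i i) - 2 * (M * c^2)"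
    unfolding t1 t2 fc by simp
  also have "\<dots> < 0" using M2 by linarith
  finally have R: "Re (f i i + f i j * t + cnj t * cnj (f i j)) < 0" .
  show False using psd[rule_format, of x] R unfolding Q by linarith
qed

lemma psd_decomp:
  fixes f :: "nat \<Rightarrow> nat \<Rightarrow> complex"
  assumes "\<forall>i<N. \<forall>k<N. f k i = cnj (f i k)"
    and "\<forall>x. 0 \<le> Re (\<Sum>i<N. \<Sum>k<N. cnj (x i) * f i k * x k)"
  shows "\<exists>us. \<forall>i<N. \<forall>k<N. f i k = (\<Sum>u\<leftarrow>us. u i * cnj (u k))"
  using assms
proof (induction N arbitrary: f)
  case 0
  then show ?case by auto
next
  case (Suc N)
  note herm = Suc.prems(1) and psd = Suc.prems(2)
  define p where "p = f N N"
  have hNN: "f N N = cnj (f N N)" by (rule herm[rule_format]) simp_all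
  have pcnj: "cnj p = p" unfolding p_def by (rule sym[OF hNN])
  have "(\<Sum>i<Suc N. \<Sum>k<Suc N. cnj ((\<lambda>k. if k = N then 1 else 0) i) * f i k * (\<lambda>k. if k = N then 1 else 0) k) = f N N"
    apply (subst sum_one[of N])
      by simp_all
  hence pge: "Re p \<ge> 0" using psd[rule_format, of "\<lambda>k. if k = N then 1 else 0"] unfolding p_def by simp
  define r where "r = Re p"
  have "Im p = 0" using arg_cong[OF pcnj, of Im] by simp
  hence pr: "p = complex_of_real r" unfolding r_def by (simp add: complex_eq_iff)
  have r0: "r \<ge> 0" using pge r_def by simp
  define sq where "sq = sqrt r"
  have sqsq: "complex_of_real sq * complex_of_real sq = p"
    unfolding pr sq_def of_real_mult[symmetric] using r0 by simp
  define u where "u = (\<lambda>i. f i N / complex_of_real sq)"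
  define g where "g = (\<lambda>i k. f i k - f i N * f N k / p)"
  have hermg: "\<forall>i<N. \<forall>k<N. g k i = cnj (g i k)"
  proof (intro allI impI)
    fix i k assume ik: "i < N" "k < N"
    have "f k i = cnj (f i k)" "f N i = cnj (f i N)" "f k N = cnj (f N k)"
      using ik by (auto intro!: herm[rule_format])
    thus "g k i = cnj (g i k)" unfolding g_def using pcnj by (simp add: mult.commute)
  qed
  have psdg: "\<forall>x. 0 \<le> Re (\<Sum>i<N. \<Sum>k<N. cnj (x i) * g i k * x k)"
  proof
    fix x :: "nat \<Rightarrow> complex"
    define s where "s = (\<Sum>k<N. f N k * x k)"
    define a where "a = (\<Sum>i<N. cnj (x i) * f i N)"
    define Q where "Q = (\<Sum>i<N. \<Sum>k<N. cnj (x i) * f i k * x k)"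
    define t where "t = - s / p"
    define y where "y = x(N := t)"
    have hN: "\<forall>k<N. f k N = cnj (f N k)" by (auto intro!: herm[rule_format])
    have acnj: "a = cnj s" unfolding a_def s_def using hN
      by (simp add: mult.commute)
    have full: "(\<Sum>i<Suc N. \<Sum>k<Suc N. cnj (y i) * f i k * y k) = Q + a * t + cnj t * s + cnj t * p * t"
    proof -
      have "(\<Sum>i<Suc N. \<Sum>k<Suc N. cnj (y i) * f i k * y k)
          = (\<Sum>i<N. (\<Sum>k<N. cnj (x i) * f i k * x k) + cnj (x i) * f i N * t)
            + ((\<Sum>k<N. cnj t * f N k * x k) + cnj t * p * t)"
        by (simp add: y_def p_def)
      also have "\<dots> = Q + a * t + cnj t * s + cnj t * p * t"
        by (simp add: Q_def a_def s_def sum.distrib sum_distrib_left sum_distrib_right mult.assoc)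
      finally show ?thesis .
    qed
    have gform: "(\<Sum>i<N. \<Sum>k<N. cnj (x i) * g i k * x k) = Q - a * s / p"
    proof -
      have "(\<Sum>i<N. \<Sum>k<N. cnj (x i) * g i k * x k)
          = (\<Sum>i<N. \<Sum>k<N. cnj (x i) * f i k * x k - (cnj (x i) * f i N) * (f N k * x k) / p)"
        unfolding g_def by (intro sum.cong) (auto simp: algebra_simps)
      also have "\<dots> = Q - a * s / p"
        apply (simp add: Q_def a_def s_def sum_subtractf sum_distrib_left sum_distrib_right sum_divide_distrib)
        by (rule sum.swap)
      finally show ?thesis .
    qed
    have eq: "Q + a * t + cnj t * s + cnj t * p * t = Q - a * s / p"
    proof (cases "p = 0")
      case True
      then show ?thesis by (simp add: t_def)
    next
      case False
      have "cnj t = - cnj s / p" unfolding t_def using pcnj by simp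
      then show ?thesis unfolding t_def using False acnj by (simp add: field_simps)
    qed
    show "0 \<le> Re (\<Sum>i<N. \<Sum>k<N. cnj (x i) * g i k * x k)"
      unfolding gform eq[symmetric] full[symmetric] by (rule psd[rule_format])
  qed
  from Suc.IH[OF hermg psdg] obtain vs where vs: "\<forall>i<N. \<forall>k<N. g i k = (\<Sum>u\<leftarrow>vs. u i * cnj (u k))"
    by blast
  define us where "us = u # map (\<lambda>v. v(N := 0)) vs"
  have p0: "f i N = 0" "f N i = 0" if "p = 0" "i < Suc N" for i
  proof -
    have "f i N = 0"
    proof (cases "i = N")
      case True then show ?thesis using that p_def by simp
    next
      case False
      then show ?thesis using zero_offdiag[OF herm psd, of i N] that p_def by simp
    qed
    moreover have "f N i = cnj (f i N)" using that by (auto intro!: herm[rule_format])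
    ultimately show "f i N = 0" "f N i = 0" by auto
  qed
  have "\<forall>i<Suc N. \<forall>k<Suc N. f i k = (\<Sum>u\<leftarrow>us. u i * cnj (u k))"
  proof (intro allI impI)
    fix i k assume ik: "i < Suc N" "k < Suc N"
    have uu: "u i * cnj (u k) = f i N * f N k / p"
    proof (cases "p = 0")
      case True then show ?thesis using p0[OF True ik(1)] by (simp add: u_def)
    next
      case False
      have e: "f N k = cnj (f k N)" using ik by (auto intro!: herm[rule_format])
      hence "cnj (f k N) = f N k" by simp
      then show ?thesis unfolding u_def using sqsq False
        by (simp add: field_simps)
    qed
    show "f i k = (\<Sum>u\<leftarrow>us. u i * cnj (u k))"
    proof (cases "i = N \<or> k = N")
      case True
      have z: "(\<Sum>v\<leftarrow>vs. (v(N := 0)) i * cnj ((v(N := 0)) k)) = 0"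
        using True by (induction vs) auto
      have "f i k = f i N * f N k / p"
      proof (cases "p = 0")
        case True
        then show ?thesis using p0[OF True] ik \<open>i = N \<or> k = N\<close> by auto
      next
        case False
        then show ?thesis using \<open>i = N \<or> k = N\<close> p_def by auto
      qed
      then show ?thesis using uu z by (simp add: us_def o_def)
    next
      case False
      hence "i < N" "k < N" using ik by auto
      hence "g i k = (\<Sum>v\<leftarrow>vs. (v(N := 0)) i * cnj ((v(N := 0)) k))"
        using vs False by (simp add: o_def)
      then show ?thesis using uu unfolding us_def g_def apply (simp add: o_def) by (metis add.commute diff_add_cancel)
    qed
  qed
  then show ?case by blast
qed




lemma pos_kernel:
  assumes "positive_op d A"
  shows "\<forall>i<d. \<forall>k<d. A$$(k,i) = cnj (A$$(i,k))"
    and "\<forall>x. 0 \<le> Re (\<Sum>i<d. \<Sum>k<d. cnj (x i) * A$$(i,k) * x k)"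
proof -
  have A: "A \<in> carrier_mat d d" "mat_adjoint A = A" using assms by (auto simp: positive_op_def)
  show "\<forall>i<d. \<forall>k<d. A$$(k,i) = cnj (A$$(i,k))" using adj_entry[OF A] by blast
  show "\<forall>x. 0 \<le> Re (\<Sum>i<d. \<Sum>k<d. cnj (x i) * A$$(i,k) * x k)"
  proof
    fix x :: "nat \<Rightarrow> complex"
    have v: "vec d x \<in> carrier_vec d" by simp
    have "conjugate (vec d x) \<bullet> (A *\<^sub>v vec d x) = (\<Sum>i<d. \<Sum>k<d. cnj (x i) * A$$(i,k) * x k)"
      unfolding qform_sum[OF A(1) v] by (intro sum.cong) auto
    moreover have "0 \<le> Re (conjugate (vec d x) \<bullet> (A *\<^sub>v vec d x))"
      using assms v unfolding positive_op_def by blast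
    ultimately show "0 \<le> Re (\<Sum>i<d. \<Sum>k<d. cnj (x i) * A$$(i,k) * x k)" by simp
  qed
qed

lemma sum_list_nonneg_real:
  assumes "\<forall>u\<in>set us. Im (F u) = 0 \<and> 0 \<le> Re (F u)"
  shows "Im (\<Sum>u\<leftarrow>us. F u) = 0 \<and> 0 \<le> Re (\<Sum>u\<leftarrow>us. F u)"
  using assms by (induction us) auto

lemma mtrace_mult:
  assumes "A \<in> carrier_mat d d" "B \<in> carrier_mat d d"
  shows "mtrace (A * B) = (\<Sum>i<d. \<Sum>k<d. A$$(i,k) * B$$(k,i))"
  using assms unfolding mtrace_def
  by (auto simp: scalar_prod_def row_def col_def lessThan_atLeast0 intro!: sum.cong)

lemma trace_pos:
  assumes rho: "positive_op d \<rho>" and M: "M \<in> carrier_mat d d"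
    and Mpos: "\<forall>v\<in>carrier_vec d. Im (conjugate v \<bullet> (M *\<^sub>v v)) = 0 \<and> 0 \<le> Re (conjugate v \<bullet> (M *\<^sub>v v))"
  shows "Im (mtrace (\<rho> * M)) = 0 \<and> 0 \<le> Re (mtrace (\<rho> * M))"
proof -
  have rc: "\<rho> \<in> carrier_mat d d" using rho by (simp add: positive_op_def)
  obtain us where us: "\<forall>i<d. \<forall>k<d. \<rho>$$(i,k) = (\<Sum>u\<leftarrow>us. u i * cnj (u k))"
    using psd_decomp[OF pos_kernel[OF rho]] by blast
  have "mtrace (\<rho> * M) = (\<Sum>i<d. \<Sum>k<d. (\<Sum>u\<leftarrow>us. u i * cnj (u k)) * M$$(k,i))"
    unfolding mtrace_mult[OF rc M] using us by (intro sum.cong) auto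
  also have "\<dots> = (\<Sum>u\<leftarrow>us. \<Sum>i<d. \<Sum>k<d. u i * cnj (u k) * M$$(k,i))"
    by (induction us) (auto simp: sum.distrib algebra_simps)
  also have "\<dots> = (\<Sum>u\<leftarrow>us. conjugate (vec d u) \<bullet> (M *\<^sub>v vec d u))"
  proof (rule arg_cong[where f = sum_list], rule map_cong[OF refl])
    fix u :: "nat \<Rightarrow> complex"
    have "conjugate (vec d u) \<bullet> (M *\<^sub>v vec d u) = (\<Sum>k<d. \<Sum>i<d. cnj (u k) * M$$(k,i) * u i)"
      unfolding qform_sum[OF M vec_carrier] by (intro sum.cong) auto
    also have "\<dots> = (\<Sum>i<d. \<Sum>k<d. u i * cnj (u k) * M$$(k,i))"
      by (subst sum.swap) (simp add: mult_ac)
    finally show "(\<Sum>i<d. \<Sum>k<d. u i * cnj (u k) * M$$(k,i)) = conjugate (vec d u) \<bullet> (M *\<^sub>v vec d u)" by simp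
  qed
  finally show ?thesis using sum_list_nonneg_real[of us "\<lambda>u. conjugate (vec d u) \<bullet> (M *\<^sub>v vec d u)"] Mpos
    by auto
qed




lemma msum_carrier: "(\<forall>j<n. A j \<in> carrier_mat d d) \<Longrightarrow> msum d n A \<in> carrier_mat d d"
  by (induction n) auto

lemma msum_index: "(\<forall>j<n. A j \<in> carrier_mat d d) \<Longrightarrow> i < d \<Longrightarrow> k < d \<Longrightarrow>
    msum d n A $$ (i,k) = (\<Sum>j<n. A j $$ (i,k))"
proof (induction n)
  case 0 then show ?case by simp
next
  case (Suc n)
  have c: "msum d n A \<in> carrier_mat d d" using msum_carrier Suc.prems(1) by simp
  have An: "A n \<in> carrier_mat d d" using Suc.prems(1) by simp
  have "(msum d n A + A n) $$ (i,k) = msum d n A $$(i,k) + A n $$ (i,k)"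
    by (subst index_add_mat(1)) (use An Suc.prems in auto)
  then show ?case using Suc c by simp
qed

lemma selfadj_iff:
  assumes "M \<in> carrier_mat d d"
  shows "mat_adjoint M = M \<longleftrightarrow> (\<forall>i<d. \<forall>k<d. M$$(k,i) = cnj (M$$(i,k)))"
proof
  assume "mat_adjoint M = M" then show "\<forall>i<d. \<forall>k<d. M$$(k,i) = cnj (M$$(i,k))"
    using adj_entry[OF assms] by blast
next
  assume h: "\<forall>i<d. \<forall>k<d. M$$(k,i) = cnj (M$$(i,k))"
  show "mat_adjoint M = M"
  proof (rule eq_matI)
    fix i k assume ik: "i < dim_row M" "k < dim_col M"
    have dd: "i < d" "k < d" using ik assms by auto
    have e: "M$$(i,k) = cnj (M$$(k,i))" using h[rule_format, OF dd(2) dd(1)] .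
    have "mat_adjoint M $$ (i,k) = cnj (M$$(k,i))"
      using dd assms by (simp add: mat_adjoint_def mat_of_rows_def)
    then show "mat_adjoint M $$ (i,k) = M $$ (i,k)" using e by simp
  next
    show "dim_row (mat_adjoint M) = dim_row M" "dim_col (mat_adjoint M) = dim_col M"
      using assms by (auto simp: mat_adjoint_def mat_of_rows_def)
  qed
qed

lemma cv_sum:
  assumes "v \<in> carrier_vec d"
  shows "conjugate v \<bullet> v = complex_of_real (\<Sum>i<d. (cmod (v$i))^2)"
proof -
  have "conjugate v \<bullet> v = (\<Sum>i<d. cnj (v$i) * v$i)"
    using assms by (auto simp: scalar_prod_def lessThan_atLeast0 intro!: sum.cong)
  also have "\<dots> = (\<Sum>i<d. complex_of_real ((cmod (v$i))^2))"
    by (intro sum.cong refl) (metis complex_norm_square mult.commute)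
  finally show ?thesis by simp
qed

lemma cv_pos:
  assumes "v \<in> carrier_vec d" "v \<noteq> 0\<^sub>v d"
  shows "(\<Sum>i<d. (cmod (v$i))^2) > 0"
proof -
  obtain i where i: "i < d" "v$i \<noteq> 0" using assms by (metis eq_vecI carrier_vecD index_zero_vec)
  have "(cmod (v$i))^2 \<le> (\<Sum>i<d. (cmod (v$i))^2)"
    by (rule member_le_sum) (use i in auto)
  moreover have "(cmod (v$i))^2 > 0" using i by simp
  ultimately show ?thesis by linarith
qed

lemma qf_real:
  assumes "positive_op d A" "v \<in> carrier_vec d"
  shows "Im (conjugate v \<bullet> (A *\<^sub>v v)) = 0" "0 \<le> Re (conjugate v \<bullet> (A *\<^sub>v v))"
  using assms unfolding positive_op_def by auto

lemma qf_msum: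
  assumes "\<forall>j<n. A j \<in> carrier_mat d d" "v \<in> carrier_vec d"
  shows "conjugate v \<bullet> (msum d n A *\<^sub>v v) = (\<Sum>j<n. conjugate v \<bullet> (A j *\<^sub>v v))"
proof -
  have "conjugate v \<bullet> (msum d n A *\<^sub>v v) = (\<Sum>i<d. \<Sum>k<d. cnj (v$i) * (\<Sum>j<n. A j $$ (i,k)) * v$k)"
    unfolding qform_sum[OF msum_carrier[OF assms(1)] assms(2)]
    using msum_index[OF assms(1)] by simp
  also have "\<dots> = (\<Sum>j<n. \<Sum>i<d. \<Sum>k<d. cnj (v$i) * A j $$ (i,k) * v$k)"
    by (simp add: sum_distrib_left sum_distrib_right sum.swap[of _ "{..<n}"])
  also have "\<dots> = (\<Sum>j<n. conjugate v \<bullet> (A j *\<^sub>v v))"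
    using assms by (auto intro!: sum.cong simp: qform_sum)
  finally show ?thesis .
qed

lemma obs_qsum:
  assumes "observable d n X" "v \<in> carrier_vec d"
  shows "(\<Sum>j<n. conjugate v \<bullet> (X j *\<^sub>v v)) = conjugate v \<bullet> v"
proof -
  have c: "\<forall>j<n. X j \<in> carrier_mat d d" using assms(1) by (auto simp: observable_def positive_op_def)
  have "(\<Sum>j<n. conjugate v \<bullet> (X j *\<^sub>v v)) = conjugate v \<bullet> (msum d n X *\<^sub>v v)"
    using qf_msum[OF c assms(2)] by simp
  also have "\<dots> = conjugate v \<bullet> v" using assms by (simp add: observable_def)
  finally show ?thesis .
qed

lemma mtrace_msum:
  assumes "\<forall>j<n. A j \<in> carrier_mat d d" "\<rho> \<in> carrier_mat d d"
  shows "mtrace (\<rho> * msum d n A) = (\<Sum>j<n. mtrace (\<rho> * A j))"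
proof -
  have "mtrace (\<rho> * msum d n A) = (\<Sum>i<d. \<Sum>k<d. \<rho>$$(i,k) * (\<Sum>j<n. A j $$ (k,i)))"
    unfolding mtrace_mult[OF assms(2) msum_carrier[OF assms(1)]]
    using msum_index[OF assms(1)] by simp
  also have "\<dots> = (\<Sum>j<n. \<Sum>i<d. \<Sum>k<d. \<rho>$$(i,k) * A j $$ (k,i))"
    by (simp add: sum_distrib_left sum.swap[of _ "{..<n}"])
  also have "\<dots> = (\<Sum>j<n. mtrace (\<rho> * A j))"
    using mtrace_mult assms by simp
  finally show ?thesis .
qed

lemma mtrace_minus:
  assumes "\<rho> \<in> carrier_mat d d" "A \<in> carrier_mat d d" "B \<in> carrier_mat d d"
  shows "mtrace (\<rho> * (A - B)) = mtrace (\<rho> * A) - mtrace (\<rho> * B)"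
  apply (subst mtrace_mult[of _ d], use assms in auto)+
  using assms by (simp add: algebra_simps sum_subtractf)

lemma mtrace_smult:
  assumes "\<rho> \<in> carrier_mat d d" "A \<in> carrier_mat d d"
  shows "mtrace (\<rho> * (c \<cdot>\<^sub>m A)) = c * mtrace (\<rho> * A)"
  using assms by (simp add: mtrace_mult sum_distrib_left mult_ac)

lemma mtrace_one:
  assumes "\<rho> \<in> carrier_mat d d"
  shows "mtrace (\<rho> * 1\<^sub>m d) = mtrace \<rho>"
  using assms by (simp add: mtrace_mult mtrace_def)

lemma mtrace_zero:
  assumes "\<rho> \<in> carrier_mat d d"
  shows "mtrace (\<rho> * 0\<^sub>m d d) = 0"
  using assms by (simp add: mtrace_def)




definition pure :: "nat \<Rightarrow> complex vec \<Rightarrow> complex mat" where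
  "pure d v = mat d d (\<lambda>(i,k). v$i * cnj (v$k) / (conjugate v \<bullet> v))"

lemma pure_carrier: "pure d v \<in> carrier_mat d d" by (simp add: pure_def)

lemma pure_trace:
  assumes v: "v \<in> carrier_vec d" and M: "M \<in> carrier_mat d d"
  shows "mtrace (pure d v * M) = (conjugate v \<bullet> (M *\<^sub>v v)) / (conjugate v \<bullet> v)"
proof -
  let ?c = "conjugate v \<bullet> v"
  have "mtrace (pure d v * M) = (\<Sum>i<d. \<Sum>k<d. (v$i * cnj (v$k) / ?c) * M$$(k,i))"
    unfolding mtrace_mult[OF pure_carrier M] by (simp add: pure_def)
  also have "\<dots> = (\<Sum>k<d. \<Sum>i<d. cnj (v$k) * M$$(k,i) * v$i) / ?c"
    by (subst sum.swap) (simp add: sum_divide_distrib mult_ac)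
  also have "\<dots> = (conjugate v \<bullet> (M *\<^sub>v v)) / ?c"
    unfolding qform_sum[OF M v] ..
  finally show ?thesis .
qed

lemma pure_density:
  assumes v: "v \<in> carrier_vec d" and nz: "v \<noteq> 0\<^sub>v d"
  shows "density_op d (pure d v)"
proof -
  define nv where "nv = (\<Sum>i<d. (cmod (v$i))^2)"
  have c: "conjugate v \<bullet> v = complex_of_real nv" unfolding nv_def by (rule cv_sum[OF v])
  have nvpos: "nv > 0" unfolding nv_def by (rule cv_pos[OF v nz])
  have adj: "mat_adjoint (pure d v) = pure d v"
    unfolding selfadj_iff[OF pure_carrier] by (simp add: pure_def c)
  have q: "Im (conjugate w \<bullet> (pure d v *\<^sub>v w)) = 0 \<and> 0 \<le> Re (conjugate w \<bullet> (pure d v *\<^sub>v w))"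
    if w: "w \<in> carrier_vec d" for w
  proof -
    define z where "z = (\<Sum>i<d. cnj (w$i) * v$i)"
    have "conjugate w \<bullet> (pure d v *\<^sub>v w) = (\<Sum>i<d. \<Sum>k<d. cnj (w$i) * (v$i * cnj (v$k) / complex_of_real nv) * w$k)"
      unfolding qform_sum[OF pure_carrier w] by (simp add: pure_def c)
    also have "\<dots> = z * cnj z / complex_of_real nv"
      unfolding z_def apply (simp add: sum_distrib_left sum_distrib_right sum_divide_distrib mult_ac)
      by (rule sum.swap)
    also have "\<dots> = complex_of_real ((cmod z)^2 / nv)"
      by (simp add: complex_norm_square[symmetric])
    finally show ?thesis using nvpos by simp
  qed
  have tr: "mtrace (pure d v) = 1"
  proof -
    have "mtrace (pure d v) = mtrace (pure d v * 1\<^sub>m d)" using mtrace_one[OF pure_carrier] by simp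
    also have "\<dots> = 1" unfolding pure_trace[OF v one_carrier_mat] using c nvpos v by simp
    finally show ?thesis .
  qed
  show ?thesis unfolding density_op_def positive_op_def using adj q tr pure_carrier by blast
qed




lemma qf_smult:
  fixes A :: "complex mat" and v :: "complex vec"
  assumes "A \<in> carrier_mat d d" "v \<in> carrier_vec d"
  shows "conjugate v \<bullet> ((c \<cdot>\<^sub>m A) *\<^sub>v v) = c * (conjugate v \<bullet> (A *\<^sub>v v))"
  unfolding qform_sum[OF smult_carrier_mat[OF assms(1)] assms(2)] qform_sum[OF assms]
  using assms by (simp add: sum_distrib_left mult_ac)

lemma qf_minus:
  fixes A B :: "complex mat" and v :: "complex vec"
  assumes "A \<in> carrier_mat d d" "B \<in> carrier_mat d d" "v \<in> carrier_vec d"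
  shows "conjugate v \<bullet> ((A - B) *\<^sub>v v) = conjugate v \<bullet> (A *\<^sub>v v) - conjugate v \<bullet> (B *\<^sub>v v)"
proof -
  have "A - B \<in> carrier_mat d d" using assms(2) by (rule minus_carrier_mat)
  then show ?thesis
    unfolding qform_sum[OF \<open>A - B \<in> carrier_mat d d\<close> assms(3)] qform_sum[OF assms(1,3)] qform_sum[OF assms(2,3)]
    using assms by (simp add: algebra_simps sum_subtractf)
qed

lemma qf_one:
  fixes v :: "complex vec"
  assumes "v \<in> carrier_vec d"
  shows "conjugate v \<bullet> (1\<^sub>m d *\<^sub>v v) = conjugate v \<bullet> v"
  by (simp only: one_mult_mat_vec[OF assms])

lemma cv_real:
  fixes v :: "complex vec"
  assumes "v \<in> carrier_vec d"
  shows "Im (conjugate v \<bullet> v) = 0" "0 \<le> Re (conjugate v \<bullet> v)"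
  using cv_sum[OF assms] by (auto intro: sum_nonneg)

lemma pos_one: "positive_op d (1\<^sub>m d)"
  unfolding positive_op_def
  using cv_real qf_one by (auto simp: selfadj_iff[OF one_carrier_mat])

lemma pos_zero: "positive_op d (0\<^sub>m d d)"
  unfolding positive_op_def
  by (auto simp: selfadj_iff[OF zero_carrier_mat] qform_sum[OF zero_carrier_mat])

definition delta_obs :: "nat \<Rightarrow> nat \<Rightarrow> nat \<Rightarrow> complex mat" where
  "delta_obs d j0 = (\<lambda>k. if k = j0 then 1\<^sub>m d else 0\<^sub>m d d)"

lemma msum_delta_gen:
  "msum d k (delta_obs d j0) = (if j0 < k then 1\<^sub>m d else 0\<^sub>m d d)"
  by (induction k) (auto simp: delta_obs_def)

lemma delta_observable:
  assumes "j0 < n"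
  shows "observable d n (delta_obs d j0)"
  unfolding observable_def msum_delta_gen using assms pos_one pos_zero
  by (auto simp: delta_obs_def)

lemma cmod_real: "Im z = 0 \<Longrightarrow> cmod z = \<bar>Re z\<bar>"
  by (metis abs_Re_le_cmod cmod_eq_Re)

lemma sum_abs_bound:
  fixes c a :: "nat \<Rightarrow> real"
  assumes c: "\<forall>j<n. m \<le> c j" and a: "\<forall>j<n. 0 \<le> a j"
    and sc: "(\<Sum>j<n. c j) = 1" and sa: "(\<Sum>j<n. a j) = 1" and m: "0 \<le> m" "m \<le> 1"
  shows "(\<Sum>j<n. \<bar>c j - a j\<bar>) \<le> 2 - 2 * m"
proof -
  have t: "\<bar>c j - a j\<bar> \<le> c j + a j - 2 * (m * a j)" if j: "j < n" for j
  proof -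
    have a1: "a j \<le> 1" unfolding sa[symmetric]
      by (rule member_le_sum) (use a j in auto)
    have h1: "m * a j \<le> a j" using mult_right_mono[OF m(2), of "a j"] a j by simp
    have h2: "m * a j \<le> m" using mult_left_mono[OF a1 m(1)] by simp
    show ?thesis using h1 h2 c j by (cases "c j \<ge> a j") auto
  qed
  have "(\<Sum>j<n. \<bar>c j - a j\<bar>) \<le> (\<Sum>j<n. c j + a j - 2 * (m * a j))"
    by (rule sum_mono) (use t in auto)
  also have "\<dots> = 2 - 2 * m"
    by (simp add: sum.distrib sum_subtractf sum_distrib_left[symmetric] sc sa)
  finally show ?thesis .
qed




definition ratio :: "complex mat \<Rightarrow> complex vec \<Rightarrow> real" where
  "ratio A v = Re (conjugate v \<bullet> (A *\<^sub>v v)) / Re (conjugate v \<bullet> v)"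

definition mS :: "nat \<Rightarrow> nat \<Rightarrow> (nat \<Rightarrow> complex mat) \<Rightarrow> real set" where
  "mS d n C = {ratio (C j) v | j v. j < n \<and> v \<in> carrier_vec d \<and> v \<noteq> 0\<^sub>v d}"

definition mC :: "nat \<Rightarrow> nat \<Rightarrow> (nat \<Rightarrow> complex mat) \<Rightarrow> real" where
  "mC d n C = Inf (mS d n C)"

lemma obs_pos: "observable d n X \<Longrightarrow> j < n \<Longrightarrow> positive_op d (X j)"
  by (simp add: observable_def)

lemma obs_car: "observable d n X \<Longrightarrow> j < n \<Longrightarrow> X j \<in> carrier_mat d d"
  by (simp add: observable_def positive_op_def)

lemma cv_pos_re:
  fixes v :: "complex vec"
  assumes "v \<in> carrier_vec d" "v \<noteq> 0\<^sub>v d"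
  shows "Re (conjugate v \<bullet> v) > 0"
  using cv_sum[OF assms(1)] cv_pos[OF assms] by simp

lemma n_pos:
  assumes "d \<ge> 1" "observable d n C"
  shows "0 < n"
proof (rule ccontr)
  assume "\<not> 0 < n"
  hence "n = 0" by simp
  hence "0\<^sub>m d d = (1\<^sub>m d :: complex mat)" using assms(2) by (simp add: observable_def)
  hence "(0\<^sub>m d d :: complex mat) $$ (0,0) = 1\<^sub>m d $$ (0,0)" by simp
  thus False using assms(1) by simp
qed

lemma unit0:
  assumes "d \<ge> 1"
  shows "unit_vec d 0 \<in> carrier_vec d" "(unit_vec d 0 :: complex vec) \<noteq> 0\<^sub>v d"
  using assms by (auto simp: unit_vec_def vec_eq_iff)

lemma mS_ne:
  assumes "d \<ge> 1" "observable d n C"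
  shows "mS d n C \<noteq> {}"
  using n_pos[OF assms] unit0[OF assms(1)] unfolding mS_def by blast

lemma ratio_nonneg:
  assumes "positive_op d A" "v \<in> carrier_vec d"
  shows "0 \<le> ratio A v"
  unfolding ratio_def using qf_real[OF assms] cv_real[OF assms(2)] by simp

lemma mS_bdd:
  assumes "observable d n C"
  shows "bdd_below (mS d n C)"
  unfolding mS_def using ratio_nonneg obs_pos[OF assms]
  by (intro bdd_belowI[of _ 0]) blast

lemma m_nonneg:
  assumes "d \<ge> 1" "observable d n C"
  shows "0 \<le> mC d n C"
  unfolding mC_def
  by (rule cInf_greatest[OF mS_ne[OF assms]]) (use ratio_nonneg obs_pos[OF assms(2)] in \<open>auto simp: mS_def\<close>)

lemma m_le1:
  assumes "d \<ge> 1" "observable d n C"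
  shows "mC d n C \<le> 1"
proof -
  let ?e = "unit_vec d 0 :: complex vec"
  have n: "0 < n" by (rule n_pos[OF assms])
  note e = unit0[OF assms(1)]
  have "Re (conjugate ?e \<bullet> (C 0 *\<^sub>v ?e)) \<le> (\<Sum>j<n. Re (conjugate ?e \<bullet> (C j *\<^sub>v ?e)))"
    by (rule member_le_sum) (use n qf_real(2)[OF obs_pos[OF assms(2)] e(1)] in auto)
  also have "\<dots> = Re (conjugate ?e \<bullet> ?e)"
    using obs_qsum[OF assms(2) e(1)] by (metis Re_sum)
  finally have "ratio (C 0) ?e \<le> 1"
    unfolding ratio_def using cv_pos_re[OF e] by simp
  moreover have "ratio (C 0) ?e \<in> mS d n C" unfolding mS_def using n e by blast
  ultimately show ?thesis unfolding mC_def
    by (meson cInf_lower2 mS_bdd[OF assms(2)])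
qed

lemma m_low:
  assumes "d \<ge> 1" "observable d n C" "j < n" "v \<in> carrier_vec d"
  shows "mC d n C * Re (conjugate v \<bullet> v) \<le> Re (conjugate v \<bullet> (C j *\<^sub>v v))"
proof (cases "v = 0\<^sub>v d")
  case True
  then show ?thesis using qf_real(2)[OF obs_pos[OF assms(2,3)] assms(4)] by simp
next
  case False
  have pos: "Re (conjugate v \<bullet> v) > 0" by (rule cv_pos_re[OF assms(4) False])
  have "ratio (C j) v \<in> mS d n C" unfolding mS_def using assms False by blast
  hence "mC d n C \<le> ratio (C j) v" unfolding mC_def by (rule cInf_lower[OF _ mS_bdd[OF assms(2)]])
  then show ?thesis using pos unfolding ratio_def by (simp add: le_divide_eq)
qed

lemma m_approx:
  assumes "d \<ge> 1" "observable d n C" "e > 0"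
  shows "\<exists>j v. j < n \<and> v \<in> carrier_vec d \<and> v \<noteq> 0\<^sub>v d \<and> ratio (C j) v < mC d n C + e"
proof -
  have "Inf (mS d n C) < mC d n C + e" using assms(3) unfolding mC_def by simp
  from cInf_lessD[OF mS_ne[OF assms(1,2)] this] show ?thesis unfolding mS_def by blast
qed




lemma dens_car: "density_op d \<rho> \<Longrightarrow> \<rho> \<in> carrier_mat d d"
  by (simp add: density_op_def positive_op_def)

lemma tr_C:
  assumes "d \<ge> 1" "observable d n C" "density_op d \<rho>" "j < n"
  shows "Im (mtrace (\<rho> * C j)) = 0 \<and> mC d n C \<le> Re (mtrace (\<rho> * C j))"
proof -
  let ?m = "mC d n C"
  define M where "M = C j - complex_of_real ?m \<cdot>\<^sub>m 1\<^sub>m d"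
  have Cj: "C j \<in> carrier_mat d d" by (rule obs_car[OF assms(2,4)])
  have M: "M \<in> carrier_mat d d" unfolding M_def by (rule minus_carrier_mat) simp
  have rho: "positive_op d \<rho>" and rc: "\<rho> \<in> carrier_mat d d"
    using assms(3) by (auto simp: density_op_def positive_op_def)
  have "Im (conjugate v \<bullet> (M *\<^sub>v v)) = 0 \<and> 0 \<le> Re (conjugate v \<bullet> (M *\<^sub>v v))"
    if v: "v \<in> carrier_vec d" for v
  proof -
    have "conjugate v \<bullet> (M *\<^sub>v v) = conjugate v \<bullet> (C j *\<^sub>v v) - complex_of_real ?m * (conjugate v \<bullet> v)"
      unfolding M_def qf_minus[OF Cj smult_carrier_mat[OF one_carrier_mat] v]
        qf_smult[OF one_carrier_mat v] qf_one[OF v] ..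
    then show ?thesis
      using qf_real[OF obs_pos[OF assms(2,4)] v] cv_real[OF v] m_low[OF assms(1,2,4) v] by simp
  qed
  from trace_pos[OF rho M] this
  have tp: "Im (mtrace (\<rho> * M)) = 0 \<and> 0 \<le> Re (mtrace (\<rho> * M))" by blast
  have "mtrace (\<rho> * M) = mtrace (\<rho> * C j) - complex_of_real ?m"
    unfolding M_def mtrace_minus[OF rc Cj smult_carrier_mat[OF one_carrier_mat]]
      mtrace_smult[OF rc one_carrier_mat] mtrace_one[OF rc]
    using assms(3) by (simp add: density_op_def)
  then show ?thesis using tp by simp
qed

lemma tr_A:
  assumes "observable d n A" "density_op d \<rho>" "j < n"
  shows "Im (mtrace (\<rho> * A j)) = 0 \<and> 0 \<le> Re (mtrace (\<rho> * A j))"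
proof -
  have rho: "positive_op d \<rho>" using assms(2) by (auto simp: density_op_def)
  show ?thesis
    by (rule trace_pos[OF rho obs_car[OF assms(1,3)]]) (use qf_real[OF obs_pos[OF assms(1,3)]] in blast)
qed

lemma tr_sum:
  assumes "observable d n X" "density_op d \<rho>"
  shows "(\<Sum>j<n. mtrace (\<rho> * X j)) = 1"
proof -
  have rc: "\<rho> \<in> carrier_mat d d" by (rule dens_car[OF assms(2)])
  have c: "\<forall>j<n. X j \<in> carrier_mat d d" using obs_car[OF assms(1)] by blast
  have "(\<Sum>j<n. mtrace (\<rho> * X j)) = mtrace (\<rho> * msum d n X)"
    using mtrace_msum[OF c rc] by simp
  also have "\<dots> = 1" using assms mtrace_one[OF rc] by (simp add: observable_def density_op_def)
  finally show ?thesis .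
qed

lemma re_sum_1:
  assumes "(\<Sum>j<n. z j) = (1::complex)"
  shows "(\<Sum>j<n. Re (z j)) = 1"
  using arg_cong[OF assms, of Re] by (simp add: Re_sum)

lemma per_rho:
  assumes "d \<ge> 1" "observable d n C" "observable d n A" "density_op d \<rho>"
  shows "(\<Sum>j<n. cmod (mtrace (\<rho> * (C j - A j)))) \<le> 2 - 2 * mC d n C"
proof -
  have rc: "\<rho> \<in> carrier_mat d d" by (rule dens_car[OF assms(4)])
  define c where "c j = Re (mtrace (\<rho> * C j))" for j
  define a where "a j = Re (mtrace (\<rho> * A j))" for j
  have eq: "cmod (mtrace (\<rho> * (C j - A j))) = \<bar>c j - a j\<bar>" if j: "j < n" for j
  proof -
    have "mtrace (\<rho> * (C j - A j)) = mtrace (\<rho> * C j) - mtrace (\<rho> * A j)"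
      by (rule mtrace_minus[OF rc obs_car[OF assms(2) j] obs_car[OF assms(3) j]])
    moreover have "Im (mtrace (\<rho> * C j)) = 0" using tr_C[OF assms(1,2,4) j] by blast
    moreover have "Im (mtrace (\<rho> * A j)) = 0" using tr_A[OF assms(3,4) j] by blast
    ultimately show ?thesis unfolding c_def a_def by (simp add: cmod_real)
  qed
  have "(\<Sum>j<n. cmod (mtrace (\<rho> * (C j - A j)))) = (\<Sum>j<n. \<bar>c j - a j\<bar>)"
    using eq by simp
  also have "\<dots> \<le> 2 - 2 * mC d n C"
  proof (rule sum_abs_bound)
    show "\<forall>j<n. mC d n C \<le> c j" using tr_C[OF assms(1,2,4)] unfolding c_def by blast
    show "\<forall>j<n. 0 \<le> a j" using tr_A[OF assms(3,4)] unfolding a_def by blast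
    show "(\<Sum>j<n. c j) = 1" unfolding c_def by (rule re_sum_1[OF tr_sum[OF assms(2,4)]])
    show "(\<Sum>j<n. a j) = 1" unfolding a_def by (rule re_sum_1[OF tr_sum[OF assms(3,4)]])
    show "0 \<le> mC d n C" by (rule m_nonneg[OF assms(1,2)])
    show "mC d n C \<le> 1" by (rule m_le1[OF assms(1,2)])
  qed
  finally show ?thesis .
qed

lemma dens_ne:
  assumes "d \<ge> 1"
  shows "{\<rho>. density_op d \<rho>} \<noteq> {}"
  using pure_density[OF unit0[OF assms]] by blast

lemma ub:
  assumes "d \<ge> 1" "observable d n C" "observable d n A"
  shows "obs_dist d n C A \<le> 2 - 2 * mC d n C"
  unfolding obs_dist_def
  by (rule cSUP_least[OF dens_ne[OF assms(1)]]) (use per_rho[OF assms] in auto)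




lemma bdd_rho:
  assumes "d \<ge> 1" "observable d n C" "observable d n A"
  shows "bdd_above ((\<lambda>\<rho>. \<Sum>j<n. cmod (mtrace (\<rho> * (C j - A j)))) ` {\<rho>. density_op d \<rho>})"
  by (rule bdd_aboveI2[of _ _ "2 - 2 * mC d n C"]) (use per_rho[OF assms] in auto)

lemma lb:
  assumes "d \<ge> 1" "observable d n C" "e > 0"
  shows "\<exists>A. observable d n A \<and> 2 - 2 * mC d n C - 2 * e \<le> obs_dist d n C A"
proof -
  obtain j0 v where j0: "j0 < n" and v: "v \<in> carrier_vec d" "v \<noteq> 0\<^sub>v d"
    and r: "ratio (C j0) v < mC d n C + e"
    using m_approx[OF assms] by blast
  define \<rho> where "\<rho> = pure d v"
  have dens: "density_op d \<rho>" unfolding \<rho>_def by (rule pure_density[OF v])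
  have rc: "\<rho> \<in> carrier_mat d d" by (rule dens_car[OF dens])
  have trr: "mtrace \<rho> = 1" using dens by (simp add: density_op_def)
  define A where "A = delta_obs d j0"
  have obsA: "observable d n A" unfolding A_def by (rule delta_observable[OF j0])
  define c where "c k = Re (mtrace (\<rho> * C k))" for k
  define dl where "dl k = (if k = j0 then 1 else (0::real))" for k
  have cim: "Im (mtrace (\<rho> * C k)) = 0" and cge: "mC d n C \<le> c k" if "k < n" for k
    using tr_C[OF assms(1,2) dens that] unfolding c_def by auto
  have csum: "(\<Sum>k<n. c k) = 1" unfolding c_def by (rule re_sum_1[OF tr_sum[OF assms(2) dens]])
  have m0: "0 \<le> mC d n C" by (rule m_nonneg[OF assms(1,2)])
  have c01: "0 \<le> c k \<and> c k \<le> 1" if k: "k < n" for k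
  proof
    show "0 \<le> c k" using cge[OF k] m0 by simp
    show "c k \<le> 1" unfolding csum[symmetric]
      by (rule member_le_sum) (use k cge m0 in \<open>auto intro: order_trans\<close>)
  qed
  have tm: "cmod (mtrace (\<rho> * (C k - A k))) = c k + dl k - 2 * (c k * dl k)" if k: "k < n" for k
  proof -
    have Ak: "A k \<in> carrier_mat d d" unfolding A_def delta_obs_def by simp
    have "mtrace (\<rho> * (C k - A k)) = mtrace (\<rho> * C k) - complex_of_real (dl k)"
      unfolding mtrace_minus[OF rc obs_car[OF assms(2) k] Ak]
      by (simp add: A_def delta_obs_def dl_def mtrace_one[OF rc] mtrace_zero[OF rc] trr)
    hence "cmod (mtrace (\<rho> * (C k - A k))) = \<bar>c k - dl k\<bar>"
      using cim[OF k] unfolding c_def by (simp add: cmod_real)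
    then show ?thesis using c01[OF k] by (auto simp: dl_def)
  qed
  have "(\<Sum>k<n. cmod (mtrace (\<rho> * (C k - A k)))) = (\<Sum>k<n. c k + dl k - 2 * (c k * dl k))"
    using tm by simp
  also have "\<dots> = 2 - 2 * c j0"
  proof -
    have s1: "(\<Sum>k<n. c k * dl k) = c j0"
      by (subst sum_one[of j0]) (auto simp: dl_def j0)
    have s2: "(\<Sum>k<n. dl k) = 1"
      by (subst sum_one[of j0]) (auto simp: dl_def j0)
    show ?thesis
      by (simp add: sum.distrib sum_subtractf sum_distrib_left[symmetric] csum s1 s2)
  qed
  finally have val: "(\<Sum>k<n. cmod (mtrace (\<rho> * (C k - A k)))) = 2 - 2 * c j0" .
  have cj0: "c j0 = ratio (C j0) v"
  proof -
    have "mtrace (\<rho> * C j0) = conjugate v \<bullet> (C j0 *\<^sub>v v) / (conjugate v \<bullet> v)"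
      unfolding \<rho>_def by (rule pure_trace[OF v(1) obs_car[OF assms(2) j0]])
    moreover have "conjugate v \<bullet> v = complex_of_real (Re (conjugate v \<bullet> v))"
      using cv_real(1)[OF v(1)] by (simp add: complex_eq_iff)
    ultimately show ?thesis unfolding c_def ratio_def by (metis Re_divide_of_real)
  qed
  have "2 - 2 * c j0 \<le> obs_dist d n C A"
    unfolding obs_dist_def val[symmetric]
    by (rule cSUP_upper[OF _ bdd_rho[OF assms(1,2) obsA]]) (use dens in simp)
  then show ?thesis using obsA r cj0 by auto
qed

lemma sup_part:
  assumes "d \<ge> 1" "observable d n C"
  shows "(SUP A \<in> {A. observable d n A}. obs_dist d n C A) = 2 - 2 * mC d n C"
proof (rule antisym)
  show "(SUP A \<in> {A. observable d n A}. obs_dist d n C A) \<le> 2 - 2 * mC d n C"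
    by (rule cSUP_least) (use assms ub[OF assms] in auto)
  show "2 - 2 * mC d n C \<le> (SUP A \<in> {A. observable d n A}. obs_dist d n C A)"
  proof (rule field_le_epsilon)
    fix e :: real assume e: "e > 0"
    obtain A where A: "observable d n A" "2 - 2 * mC d n C - 2 * (e/2) \<le> obs_dist d n C A"
      using lb[OF assms, of "e/2"] e by auto
    have "obs_dist d n C A \<le> (SUP A \<in> {A. observable d n A}. obs_dist d n C A)"
      by (rule cSUP_upper) (use A(1) ub[OF assms] in \<open>auto intro!: bdd_aboveI2\<close>)
    then show "2 - 2 * mC d n C \<le> (SUP A \<in> {A. observable d n A}. obs_dist d n C A) + e"
      using A(2) by simp
  qed
qed




lemma cle0: "(0 \<le> complex_of_real t) \<longleftrightarrow> 0 \<le> t"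
  by (simp add: less_eq_complex_def)

lemma clt1: "(complex_of_real t < 1) \<longleftrightarrow> t < 1"
  by (simp add: less_complex_def)

lemma Y_entry:
  assumes "A \<in> carrier_mat d d" "B \<in> carrier_mat d d" "a < d" "b < d"
  shows "(s \<cdot>\<^sub>m (A - r \<cdot>\<^sub>m B)) $$ (a,b) = s * (A $$ (a,b) - r * B $$ (a,b))"
  using assms by simp

lemma Y_qf:
  fixes A B :: "complex mat" and v :: "complex vec"
  assumes "A \<in> carrier_mat d d" "B \<in> carrier_mat d d" "v \<in> carrier_vec d"
  shows "conjugate v \<bullet> ((s \<cdot>\<^sub>m (A - r \<cdot>\<^sub>m B)) *\<^sub>v v)
       = s * (conjugate v \<bullet> (A *\<^sub>v v) - r * (conjugate v \<bullet> (B *\<^sub>v v)))"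
proof -
  have rB: "r \<cdot>\<^sub>m B \<in> carrier_mat d d" using assms(2) by simp
  have AB: "A - r \<cdot>\<^sub>m B \<in> carrier_mat d d" using rB by (rule minus_carrier_mat)
  show ?thesis
    unfolding qf_smult[OF AB assms(3)] qf_minus[OF assms(1) rB assms(3)] qf_smult[OF assms(2) assms(3)] ..
qed

lemma qX_le:
  assumes "observable d n X" "j < n" "v \<in> carrier_vec d"
  shows "Re (conjugate v \<bullet> (X j *\<^sub>v v)) \<le> Re (conjugate v \<bullet> v)"
proof -
  have "Re (conjugate v \<bullet> (X j *\<^sub>v v)) \<le> (\<Sum>k<n. Re (conjugate v \<bullet> (X k *\<^sub>v v)))"
    by (rule member_le_sum) (use assms qf_real(2)[OF obs_pos[OF assms(1)] assms(3)] in auto)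
  also have "\<dots> = Re (conjugate v \<bullet> v)"
    using obs_qsum[OF assms(1,3)] by (metis Re_sum)
  finally show ?thesis .
qed

lemma w_obs:
  assumes d: "d \<ge> 1" and obsC: "observable d n C" and obsX: "observable d n X"
    and t: "0 \<le> t" "t < 1" "t \<le> mC d n C"
  shows "observable d n (\<lambda>j. (1 / (1 - complex_of_real t)) \<cdot>\<^sub>m (C j - complex_of_real t \<cdot>\<^sub>m X j))"
proof -
  define s' where "s' = 1 / (1 - t)"
  have s'pos: "s' > 0" unfolding s'_def using t by simp
  have seq: "1 / (1 - complex_of_real t) = complex_of_real s'" unfolding s'_def by simp
  have pos: "positive_op d (complex_of_real s' \<cdot>\<^sub>m (C j - complex_of_real t \<cdot>\<^sub>m X j))" if j: "j < n" for j
  proof -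
    have Cj: "C j \<in> carrier_mat d d" by (rule obs_car[OF obsC j])
    have Xj: "X j \<in> carrier_mat d d" by (rule obs_car[OF obsX j])
    have car: "complex_of_real s' \<cdot>\<^sub>m (C j - complex_of_real t \<cdot>\<^sub>m X j) \<in> carrier_mat d d"
      using Xj by (intro smult_carrier_mat minus_carrier_mat) simp
    have adj: "mat_adjoint (complex_of_real s' \<cdot>\<^sub>m (C j - complex_of_real t \<cdot>\<^sub>m X j)) =
               complex_of_real s' \<cdot>\<^sub>m (C j - complex_of_real t \<cdot>\<^sub>m X j)"
      unfolding selfadj_iff[OF car]
    proof (intro allI impI)
      fix a b assume ab: "a < d" "b < d"
      have hC: "C j $$ (b,a) = cnj (C j $$ (a,b))" by (rule adj_entry[OF Cj _ ab]) (use obs_pos[OF obsC j] in \<open>simp add: positive_op_def\<close>)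
      have hX: "X j $$ (b,a) = cnj (X j $$ (a,b))" by (rule adj_entry[OF Xj _ ab]) (use obs_pos[OF obsX j] in \<open>simp add: positive_op_def\<close>)
      show "(complex_of_real s' \<cdot>\<^sub>m (C j - complex_of_real t \<cdot>\<^sub>m X j)) $$ (b, a) =
            cnj ((complex_of_real s' \<cdot>\<^sub>m (C j - complex_of_real t \<cdot>\<^sub>m X j)) $$ (a, b))"
        unfolding Y_entry[OF Cj Xj ab(2) ab(1)] Y_entry[OF Cj Xj ab] hC hX by simp
    qed
    have q: "Im (conjugate v \<bullet> ((complex_of_real s' \<cdot>\<^sub>m (C j - complex_of_real t \<cdot>\<^sub>m X j)) *\<^sub>v v)) = 0 \<and>
             0 \<le> Re (conjugate v \<bullet> ((complex_of_real s' \<cdot>\<^sub>m (C j - complex_of_real t \<cdot>\<^sub>m X j)) *\<^sub>v v))"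
      if v: "v \<in> carrier_vec d" for v
    proof -
      have iC: "Im (conjugate v \<bullet> (C j *\<^sub>v v)) = 0" by (rule qf_real(1)[OF obs_pos[OF obsC j] v])
      have iX: "Im (conjugate v \<bullet> (X j *\<^sub>v v)) = 0" by (rule qf_real(1)[OF obs_pos[OF obsX j] v])
      have l1: "mC d n C * Re (conjugate v \<bullet> v) \<le> Re (conjugate v \<bullet> (C j *\<^sub>v v))"
        by (rule m_low[OF d obsC j v])
      have l2: "Re (conjugate v \<bullet> (X j *\<^sub>v v)) \<le> Re (conjugate v \<bullet> v)" by (rule qX_le[OF obsX j v])
      have nv: "0 \<le> Re (conjugate v \<bullet> v)" by (rule cv_real(2)[OF v])
      have "t * Re (conjugate v \<bullet> (X j *\<^sub>v v)) \<le> t * Re (conjugate v \<bullet> v)"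
        by (rule mult_left_mono[OF l2 t(1)])
      also have "\<dots> \<le> mC d n C * Re (conjugate v \<bullet> v)"
        using t(3) nv by (rule mult_right_mono)
      finally have key: "0 \<le> Re (conjugate v \<bullet> (C j *\<^sub>v v)) - t * Re (conjugate v \<bullet> (X j *\<^sub>v v))"
        using l1 by linarith
      show ?thesis unfolding Y_qf[OF Cj Xj v] using iC iX key s'pos by simp
    qed
    show ?thesis unfolding positive_op_def using car adj q by blast
  qed
  have ms: "msum d n (\<lambda>j. complex_of_real s' \<cdot>\<^sub>m (C j - complex_of_real t \<cdot>\<^sub>m X j)) = 1\<^sub>m d"
  proof -
    have cY: "\<forall>j<n. complex_of_real s' \<cdot>\<^sub>m (C j - complex_of_real t \<cdot>\<^sub>m X j) \<in> carrier_mat d d"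
      using pos by (simp add: positive_op_def)
    have cC: "\<forall>j<n. C j \<in> carrier_mat d d" using obs_car[OF obsC] by blast
    have cX: "\<forall>j<n. X j \<in> carrier_mat d d" using obs_car[OF obsX] by blast
    have mC1: "msum d n C = 1\<^sub>m d" and mX1: "msum d n X = 1\<^sub>m d"
      using obsC obsX by (auto simp: observable_def)
    show ?thesis
    proof (rule eq_matI)
      fix a b assume ab: "a < dim_row (1\<^sub>m d :: complex mat)" "b < dim_col (1\<^sub>m d :: complex mat)"
      hence ab': "a < d" "b < d" by auto
      have "msum d n (\<lambda>j. complex_of_real s' \<cdot>\<^sub>m (C j - complex_of_real t \<cdot>\<^sub>m X j)) $$ (a,b)
          = (\<Sum>j<n. complex_of_real s' * (C j $$ (a,b) - complex_of_real t * X j $$ (a,b)))"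
        unfolding msum_index[OF cY ab'] using cC cX by (intro sum.cong refl) (simp add: Y_entry[OF _ _ ab'])
      also have "\<dots> = complex_of_real s' * (msum d n C $$ (a,b) - complex_of_real t * msum d n X $$ (a,b))"
        unfolding msum_index[OF cC ab'] msum_index[OF cX ab']
        by (simp add: sum_distrib_left[symmetric] sum_subtractf)
      also have "\<dots> = complex_of_real s' * (1 - complex_of_real t) * (1\<^sub>m d $$ (a,b))"
        unfolding mC1 mX1 by (simp add: algebra_simps)
      also have "\<dots> = 1\<^sub>m d $$ (a,b)"
        using t(2) unfolding s'_def by (simp add: field_simps)
      finally show "msum d n (\<lambda>j. complex_of_real s' \<cdot>\<^sub>m (C j - complex_of_real t \<cdot>\<^sub>m X j)) $$ (a,b) = 1\<^sub>m d $$ (a,b)" .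
    next
      show "dim_row (msum d n (\<lambda>j. complex_of_real s' \<cdot>\<^sub>m (C j - complex_of_real t \<cdot>\<^sub>m X j))) = dim_row (1\<^sub>m d :: complex mat)"
           "dim_col (msum d n (\<lambda>j. complex_of_real s' \<cdot>\<^sub>m (C j - complex_of_real t \<cdot>\<^sub>m X j))) = dim_col (1\<^sub>m d :: complex mat)"
        using msum_carrier[OF cY] by auto
    qed
  qed
  show ?thesis unfolding seq observable_def using pos ms by blast
qed




definition Tset :: "nat \<Rightarrow> nat \<Rightarrow> (nat \<Rightarrow> complex mat) \<Rightarrow> (nat \<Rightarrow> complex mat) \<Rightarrow> real set" where
  "Tset d n y x = {t::real. 0 \<le> complex_of_real t \<and> complex_of_real t < 1 \<and>
        observable d n (\<lambda>j. (1 / (1 - complex_of_real t)) \<cdot>\<^sub>m (y j - complex_of_real t \<cdot>\<^sub>m x j))}"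

lemma weight_T: "weight d n y x = Sup (Tset d n y x)"
  unfolding weight_def Tset_def ..

lemma T_bdd: "bdd_above (Tset d n y x)"
  unfolding Tset_def by (rule bdd_aboveI[of _ 1]) (auto simp: clt1)

lemma T_mem:
  assumes "d \<ge> 1" "observable d n C" "observable d n X" "0 \<le> t" "t < 1" "t \<le> mC d n C"
  shows "t \<in> Tset d n C X"
  unfolding Tset_def using w_obs[OF assms] assms(4,5) by (simp add: cle0 clt1)

lemma T0:
  assumes "d \<ge> 1" "observable d n C" "observable d n X"
  shows "0 \<in> Tset d n C X"
  by (rule T_mem[OF assms]) (use m_nonneg[OF assms(1,2)] in auto)

lemma w_ge:
  assumes "d \<ge> 1" "observable d n C" "observable d n X"
  shows "mC d n C \<le> weight d n C X"
  unfolding weight_T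
proof (rule field_le_epsilon)
  fix e :: real assume e: "e > 0"
  show "mC d n C \<le> Sup (Tset d n C X) + e"
  proof (cases "mC d n C \<le> e")
    case True
    have "0 \<le> Sup (Tset d n C X)" by (rule cSup_upper[OF T0[OF assms] T_bdd])
    then show ?thesis using True by simp
  next
    case False
    have "mC d n C - e \<in> Tset d n C X"
      by (rule T_mem[OF assms]) (use False e m_le1[OF assms(1,2)] in auto)
    hence "mC d n C - e \<le> Sup (Tset d n C X)" by (rule cSup_upper[OF _ T_bdd])
    then show ?thesis by simp
  qed
qed

lemma w_le:
  assumes "d \<ge> 1" "observable d n C" "j0 < n" "v \<in> carrier_vec d" "v \<noteq> 0\<^sub>v d"
  shows "weight d n C (delta_obs d j0) \<le> ratio (C j0) v"
  unfolding weight_T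
proof (rule cSup_least)
  show "Tset d n C (delta_obs d j0) \<noteq> {}" using T0[OF assms(1,2) delta_observable[OF assms(3)]] by blast
next
  fix t assume "t \<in> Tset d n C (delta_obs d j0)"
  hence t: "0 \<le> t" "t < 1" and obs: "observable d n (\<lambda>j. (1 / (1 - complex_of_real t)) \<cdot>\<^sub>m (C j - complex_of_real t \<cdot>\<^sub>m delta_obs d j0 j))"
    unfolding Tset_def by (auto simp: cle0 clt1)
  have p: "positive_op d ((1 / (1 - complex_of_real t)) \<cdot>\<^sub>m (C j0 - complex_of_real t \<cdot>\<^sub>m 1\<^sub>m d))"
    using obs_pos[OF obs assms(3)] by (simp add: delta_obs_def)
  have seq: "1 / (1 - complex_of_real t) = complex_of_real (1 / (1 - t))" by simp
  have Cj: "C j0 \<in> carrier_mat d d" by (rule obs_car[OF assms(2,3)])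
  have "0 \<le> Re (conjugate v \<bullet> (((1 / (1 - complex_of_real t)) \<cdot>\<^sub>m (C j0 - complex_of_real t \<cdot>\<^sub>m 1\<^sub>m d)) *\<^sub>v v))"
    by (rule qf_real(2)[OF p assms(4)])
  also have "conjugate v \<bullet> (((1 / (1 - complex_of_real t)) \<cdot>\<^sub>m (C j0 - complex_of_real t \<cdot>\<^sub>m 1\<^sub>m d)) *\<^sub>v v)
      = complex_of_real (1 / (1 - t)) * (conjugate v \<bullet> (C j0 *\<^sub>v v) - complex_of_real t * (conjugate v \<bullet> v))"
    unfolding seq Y_qf[OF Cj one_carrier_mat assms(4)] qf_one[OF assms(4)] ..
  finally have "0 \<le> (1 / (1 - t)) * (Re (conjugate v \<bullet> (C j0 *\<^sub>v v)) - t * Re (conjugate v \<bullet> v))"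
    by simp
  hence "t * Re (conjugate v \<bullet> v) \<le> Re (conjugate v \<bullet> (C j0 *\<^sub>v v))"
    using t by (simp add: zero_le_divide_iff)
  then show "t \<le> ratio (C j0) v"
    unfolding ratio_def using cv_pos_re[OF assms(4,5)] by (simp add: le_divide_eq)
qed

lemma b_part:
  assumes "d \<ge> 1" "observable d n C"
  shows "boundariness d n C = mC d n C"
  unfolding boundariness_def
proof (rule antisym)
  show "mC d n C \<le> (INF x \<in> {x. observable d n x}. weight d n C x)"
    by (rule cINF_greatest) (use assms w_ge[OF assms] in auto)
  show "(INF x \<in> {x. observable d n x}. weight d n C x) \<le> mC d n C"
  proof (rule field_le_epsilon)
    fix e :: real assume e: "e > 0"
    obtain j0 v where j0: "j0 < n" "v \<in> carrier_vec d" "v \<noteq> 0\<^sub>v d" "ratio (C j0) v < mC d n C + e"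
      using m_approx[OF assms e] by blast
    have "(INF x \<in> {x. observable d n x}. weight d n C x) \<le> weight d n C (delta_obs d j0)"
      by (rule cINF_lower) (use delta_observable[OF j0(1)] w_ge[OF assms] in \<open>auto intro!: bdd_belowI2\<close>)
    also have "\<dots> \<le> ratio (C j0) v" by (rule w_le[OF assms j0(1-3)])
    finally show "(INF x \<in> {x. observable d n x}. weight d n C x) \<le> mC d n C + e"
      using j0(4) by simp
  qed
qed

theorem proposition8:
  fixes d n :: nat and C :: "nat \<Rightarrow> complex mat"
  assumes "d \<ge> 1"
    and "observable d n C"
  shows "(SUP A \<in> {A. observable d n A}. obs_dist d n C A) = 2 * (1 - boundariness d n C)"
  unfolding sup_part[OF assms] b_part[OF assms] by simp


end
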